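(* Let $m\ge 3$, $H=B(l_1,\ldots,l_m)$ and $G=H^2$. Then $G$ is equitably $(m+2)$-choosable.
   Context: All graphs are finite and simple. For $m,l_1,\ldots,l_m\in\mathbb{N}$ with $l_1\le\cdots\le l_m$, $B(l_1,\ldots,l_m)$ is the graph with vertex set $\{u\}\cup\{v_{i,j}: i\in[m], j\in[l_i]\}$ in which, for each $i\in[m]$, consecutive vertices in the sequence $u, v_{i,1},\ldots,v_{i,l_i}$ are adjacent (and there are no other edges). For a graph $H$, $H^2$ has vertex set $V(H)$ with two vertices adjacent iff their distance in $H$ is 1 or 2. A $k$-assignment $L$ assigns to each vertex a set of exactly $k$ colors; an equitable $L$-coloring of $G$ is a proper coloring $f$ with $f(v)\in L(v)$ such that no color is used more than $\lceil |V(G)|/k\rceil$ times; $G$ is equitably $k$-choosable if it has an equitable $L$-coloring for every $k$-assignment $L$. *)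

theory Defs
  imports Complex_Main
begin

text \<open>The spider B(l_1,...,l_m): centre u = (0,0), v_{i,j} = (i,j) for 1 \<le> i \<le> m, 1 \<le> j \<le> l i.\<close>
definition spider_verts :: "nat \<Rightarrow> (nat \<Rightarrow> nat) \<Rightarrow> (nat \<times> nat) set" where
  "spider_verts m l = {(0,0)} \<union> {(i,j). 1 \<le> i \<and> i \<le> m \<and> 1 \<le> j \<and> j \<le> l i}"

definition spider_adj :: "nat \<Rightarrow> (nat \<Rightarrow> nat) \<Rightarrow> nat \<times> nat \<Rightarrow> nat \<times> nat \<Rightarrow> bool" where
  "spider_adj m l x y \<longleftrightarrow> x \<in> spider_verts m l \<and> y \<in> spider_verts m l \<and>
     ((x = (0,0) \<and> fst y \<ge> 1 \<and> snd y = 1) \<or>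
      (y = (0,0) \<and> fst x \<ge> 1 \<and> snd x = 1) \<or>
      (fst x \<ge> 1 \<and> fst x = fst y \<and> (snd y = snd x + 1 \<or> snd x = snd y + 1)))"

definition graph_square :: "'a set \<Rightarrow> ('a \<Rightarrow> 'a \<Rightarrow> bool) \<Rightarrow> 'a \<Rightarrow> 'a \<Rightarrow> bool" where
  "graph_square V E x y \<longleftrightarrow> x \<in> V \<and> y \<in> V \<and> x \<noteq> y \<and>
     (E x y \<or> (\<exists>z\<in>V. E x z \<and> E z y))"

definition k_assignment :: "'a set \<Rightarrow> nat \<Rightarrow> ('a \<Rightarrow> nat set) \<Rightarrow> bool" where
  "k_assignment V k L \<longleftrightarrow> (\<forall>v\<in>V. finite (L v) \<and> card (L v) = k)"

definition equitable_L_coloring ::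
  "'a set \<Rightarrow> ('a \<Rightarrow> 'a \<Rightarrow> bool) \<Rightarrow> nat \<Rightarrow> ('a \<Rightarrow> nat set) \<Rightarrow> ('a \<Rightarrow> nat) \<Rightarrow> bool" where
  "equitable_L_coloring V E k L f \<longleftrightarrow>
     (\<forall>v\<in>V. f v \<in> L v) \<and>
     (\<forall>x\<in>V. \<forall>y\<in>V. E x y \<longrightarrow> f x \<noteq> f y) \<and>
     (\<forall>c. card {v\<in>V. f v = c} \<le> nat \<lceil>real (card V) / real k\<rceil>)"

definition equitably_choosable :: "'a set \<Rightarrow> ('a \<Rightarrow> 'a \<Rightarrow> bool) \<Rightarrow> nat \<Rightarrow> bool" where
  "equitably_choosable V E k \<longleftrightarrow>
     (\<forall>L. k_assignment V k L \<longrightarrow> (\<exists>f. equitable_L_coloring V E k L f))"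

end

theory Submission
  imports Defs
begin

lemma sdr_greedy:
  fixes S :: "'a set"
  assumes "finite S"
  shows "\<forall>A :: 'a \<Rightarrow> nat set. (\<forall>z\<in>S. finite (A z)) \<and> (\<forall>w. card {z\<in>S. card (A z) \<le> w} \<le> w)
         \<longrightarrow> (\<exists>g. inj_on g S \<and> (\<forall>z\<in>S. g z \<in> A z))"
  using assms
proof (induction S rule: finite_remove_induct)
  case empty
  then show ?case by auto
next
  case (remove S)
  show ?case
  proof (intro allI impI)
    fix A :: "'a \<Rightarrow> nat set"
    assume asm: "(\<forall>z\<in>S. finite (A z)) \<and> (\<forall>w. card {z\<in>S. card (A z) \<le> w} \<le> w)"
    hence fin: "\<forall>z\<in>S. finite (A z)" and cnd: "\<And>w. card {z\<in>S. card (A z) \<le> w} \<le> w" by auto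
    obtain x0 where x0: "x0 \<in> S" "\<forall>z\<in>S. card (A x0) \<le> card (A z)"
    proof -
      let ?M = "Min ((\<lambda>z. card (A z)) ` S)"
      have "?M \<in> (\<lambda>z. card (A z)) ` S" using remove by (intro Min_in) auto
      then obtain x where "x \<in> S" "card (A x) = ?M" by auto
      moreover have "\<forall>z\<in>S. ?M \<le> card (A z)" using remove by auto
      ultimately show ?thesis using that by auto
    qed
    have "card (A x0) \<noteq> 0"
    proof
      assume h: "card (A x0) = 0"
      have "x0 \<in> {z\<in>S. card (A z) \<le> 0}" using x0 h by auto
      moreover have "finite {z\<in>S. card (A z) \<le> 0}" using remove by auto
      ultimately have "card {z\<in>S. card (A z) \<le> 0} > 0" by (metis card_gt_0_iff empty_iff)
      thus False using cnd[of 0] by simp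
    qed
    then obtain c where c: "c \<in> A x0" by (metis all_not_in_conv card.empty)
    define A' where "A' = (\<lambda>z. A z - {c})"
    have le1: "card (A z) \<le> card (A' z) + 1" if "z \<in> S" for z
      using fin that unfolding A'_def by (simp add: card_Diff_singleton_if) linarith
    have "(\<forall>z\<in>S - {x0}. finite (A' z)) \<and> (\<forall>w. card {z \<in> S - {x0}. card (A' z) \<le> w} \<le> w)"
    proof (intro conjI allI ballI)
      fix z assume "z \<in> S - {x0}" thus "finite (A' z)" using fin A'_def by auto
    next
      fix w
      show "card {z \<in> S - {x0}. card (A' z) \<le> w} \<le> w"
      proof (cases "{z \<in> S - {x0}. card (A' z) \<le> w} = {}")
        case True then show ?thesis by (simp only: card.empty)
      next
        case False
        then obtain z where z: "z \<in> S - {x0}" "card (A' z) \<le> w" by auto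
        have x0in: "x0 \<in> {z\<in>S. card (A z) \<le> w + 1}" using x0 z le1[of z] by force
        have sub: "{z \<in> S - {x0}. card (A' z) \<le> w} \<subseteq> {z\<in>S. card (A z) \<le> w + 1} - {x0}"
          using le1 by force
        have "card {z \<in> S - {x0}. card (A' z) \<le> w} \<le> card ({z\<in>S. card (A z) \<le> w + 1} - {x0})"
          using remove(1) by (intro card_mono[OF _ sub]) auto
        also have "\<dots> = card {z\<in>S. card (A z) \<le> w + 1} - 1"
          using x0in remove(1) by (simp add: card_Diff_singleton_if)
        also have "\<dots> \<le> w" using cnd[of "w+1"] by simp
        finally show ?thesis .
      qed
    qed
    then obtain g where g: "inj_on g (S - {x0})" "\<forall>z\<in>S - {x0}. g z \<in> A' z"
      using remove.IH[OF x0(1)] by blast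
    define g' where "g' = g(x0 := c)"
    have "inj_on g' S"
      unfolding inj_on_def
    proof (intro ballI impI)
      fix x y assume xy: "x \<in> S" "y \<in> S" "g' x = g' y"
      show "x = y"
      proof (cases "x = x0"; cases "y = x0")
        assume "x = x0" "y = x0" thus ?thesis by simp
      next
        assume "x = x0" "y \<noteq> x0"
        thus ?thesis using xy g(2) A'_def g'_def by auto
      next
        assume "x \<noteq> x0" "y = x0"
        thus ?thesis using xy g(2) A'_def g'_def by auto
      next
        assume "x \<noteq> x0" "y \<noteq> x0"
        thus ?thesis using xy g(1) g'_def by (auto simp: inj_on_def)
      qed
    qed
    moreover have "\<forall>z\<in>S. g' z \<in> A z" using g(2) c A'_def g'_def by auto
    ultimately show "\<exists>g. inj_on g S \<and> (\<forall>z\<in>S. g z \<in> A z)" by blast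
  qed
qed

lemma block_greedy:
  fixes V :: "'a set" and E :: "'a \<Rightarrow> 'a \<Rightarrow> bool" and \<beta> :: "'a \<Rightarrow> nat"
  assumes finV: "finite V" and kL: "k_assignment V k L" and bt: "\<forall>x\<in>V. \<beta> x < t"
    and irr: "\<forall>x\<in>V. \<not> E x x"
    and crit: "\<And>b w. card {z\<in>V. \<beta> z = b \<and> k - card {y\<in>V. \<beta> y < \<beta> z \<and> (E y z \<or> E z y)} \<le> w} \<le> w"
  shows "\<exists>f. (\<forall>v\<in>V. f v \<in> L v) \<and> (\<forall>x\<in>V. \<forall>y\<in>V. E x y \<longrightarrow> f x \<noteq> f y) \<and> (\<forall>c. card {v\<in>V. f v = c} \<le> t)"
proof -
  define N where "N = (\<lambda>z. {y\<in>V. \<beta> y < \<beta> z \<and> (E y z \<or> E z y)})"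
  have main: "\<exists>f. (\<forall>v\<in>V. \<beta> v < T \<longrightarrow> f v \<in> L v) \<and> (\<forall>x\<in>V. \<forall>y\<in>V. \<beta> x < T \<longrightarrow> \<beta> y < T \<longrightarrow> E x y \<longrightarrow> f x \<noteq> f y)
     \<and> (\<forall>x\<in>V. \<forall>y\<in>V. \<beta> x < T \<longrightarrow> \<beta> x = \<beta> y \<longrightarrow> x \<noteq> y \<longrightarrow> f x \<noteq> f y)" for T
  proof (induction T)
    case 0
    then show ?case by auto
  next
    case (Suc T)
    then obtain f where f1: "\<forall>v\<in>V. \<beta> v < T \<longrightarrow> f v \<in> L v"
      and f2: "\<forall>x\<in>V. \<forall>y\<in>V. \<beta> x < T \<longrightarrow> \<beta> y < T \<longrightarrow> E x y \<longrightarrow> f x \<noteq> f y"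
      and f3: "\<forall>x\<in>V. \<forall>y\<in>V. \<beta> x < T \<longrightarrow> \<beta> x = \<beta> y \<longrightarrow> x \<noteq> y \<longrightarrow> f x \<noteq> f y" by blast
    define B where "B = {z\<in>V. \<beta> z = T}"
    define A where "A = (\<lambda>z. L z - f ` N z)"
    have finB: "finite B" using finV B_def by auto
    have finN: "finite (N z)" for z using finV N_def by auto
    have Afin: "\<forall>z\<in>B. finite (A z)" using kL unfolding A_def B_def k_assignment_def by auto
    have Acard: "k - card (N z) \<le> card (A z)" if "z \<in> B" for z
    proof -
      have "card (L z) = k" using kL that unfolding B_def k_assignment_def by auto
      moreover have "card (f ` N z) \<le> card (N z)" using finN by (rule card_image_le)
      moreover have "card (L z) - card (f ` N z) \<le> card (A z)"
        unfolding A_def using finN by (intro diff_card_le_card_Diff) auto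
      ultimately show ?thesis by linarith
    qed
    have "\<forall>w. card {z\<in>B. card (A z) \<le> w} \<le> w"
    proof
      fix w
      have "{z\<in>B. card (A z) \<le> w} \<subseteq> {z\<in>V. \<beta> z = T \<and> k - card (N z) \<le> w}"
        using Acard B_def by force
      hence "card {z\<in>B. card (A z) \<le> w} \<le> card {z\<in>V. \<beta> z = T \<and> k - card (N z) \<le> w}"
        using finV by (intro card_mono) auto
      also have "\<dots> \<le> w" using crit[of T w] unfolding N_def .
      finally show "card {z\<in>B. card (A z) \<le> w} \<le> w" .
    qed
    then obtain g where g1: "inj_on g B" and g2: "\<forall>z\<in>B. g z \<in> A z"
      using sdr_greedy[OF finB] Afin by blast
    define f' where "f' = (\<lambda>z. if \<beta> z = T then g z else f z)"
    have "\<forall>v\<in>V. \<beta> v < Suc T \<longrightarrow> f' v \<in> L v"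
      using f1 g2 unfolding f'_def A_def B_def by (auto simp: less_Suc_eq)
    moreover have "\<forall>x\<in>V. \<forall>y\<in>V. \<beta> x < Suc T \<longrightarrow> \<beta> y < Suc T \<longrightarrow> E x y \<longrightarrow> f' x \<noteq> f' y"
    proof (intro ballI impI)
      fix x y assume xy: "x \<in> V" "y \<in> V" "\<beta> x < Suc T" "\<beta> y < Suc T" "E x y"
      show "f' x \<noteq> f' y"
      proof (cases "\<beta> x = T"; cases "\<beta> y = T")
        assume "\<beta> x = T" "\<beta> y = T"
        moreover have "x \<noteq> y" using irr xy by auto
        ultimately show ?thesis using g1 xy unfolding f'_def B_def inj_on_def by auto
      next
        assume h: "\<beta> x = T" "\<beta> y \<noteq> T"
        hence "y \<in> N x" using xy N_def by auto
        thus ?thesis using h g2 xy unfolding f'_def A_def B_def by auto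
      next
        assume h: "\<beta> x \<noteq> T" "\<beta> y = T"
        hence "x \<in> N y" using xy N_def by auto
        hence "f x \<in> f ` N y" by blast
        moreover have "g y \<notin> f ` N y" using g2 xy h unfolding A_def B_def by auto
        ultimately show ?thesis using h unfolding f'_def by auto
      next
        assume h: "\<beta> x \<noteq> T" "\<beta> y \<noteq> T"
        thus ?thesis using f2 xy unfolding f'_def by auto
      qed
    qed
    moreover have "\<forall>x\<in>V. \<forall>y\<in>V. \<beta> x < Suc T \<longrightarrow> \<beta> x = \<beta> y \<longrightarrow> x \<noteq> y \<longrightarrow> f' x \<noteq> f' y"
    proof (intro ballI impI)
      fix x y assume xy: "x \<in> V" "y \<in> V" "\<beta> x < Suc T" "\<beta> x = \<beta> y" "x \<noteq> y"
      show "f' x \<noteq> f' y"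
      proof (cases "\<beta> x = T")
        case True
        thus ?thesis using g1 xy unfolding f'_def B_def inj_on_def by auto
      next
        case False
        thus ?thesis using f3 xy unfolding f'_def by auto
      qed
    qed
    ultimately show ?case by blast
  qed
  obtain f where f1: "\<forall>v\<in>V. \<beta> v < t \<longrightarrow> f v \<in> L v"
      and f2: "\<forall>x\<in>V. \<forall>y\<in>V. \<beta> x < t \<longrightarrow> \<beta> y < t \<longrightarrow> E x y \<longrightarrow> f x \<noteq> f y"
      and f3: "\<forall>x\<in>V. \<forall>y\<in>V. \<beta> x < t \<longrightarrow> \<beta> x = \<beta> y \<longrightarrow> x \<noteq> y \<longrightarrow> f x \<noteq> f y"
    using main[of t] by blast
  have "card {v\<in>V. f v = c} \<le> t" for c
  proof -
    have "inj_on \<beta> {v\<in>V. f v = c}" using f3 bt unfolding inj_on_def by (metis (mono_tags, lifting) mem_Collect_eq)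
    hence "card {v\<in>V. f v = c} = card (\<beta> ` {v\<in>V. f v = c})" by (simp add: card_image)
    also have "\<dots> \<le> card {..<t}" using bt by (intro card_mono) auto
    finally show ?thesis by simp
  qed
  thus ?thesis using f1 f2 bt by blast
qed


definition PP :: "(nat \<Rightarrow> nat) \<Rightarrow> nat \<Rightarrow> nat" where "PP l i = sum l {1..<i}"
definition spos :: "(nat \<Rightarrow> nat) \<Rightarrow> nat \<times> nat \<Rightarrow> nat" where
  "spos l x = (if fst x = 0 then 0 else PP l (fst x) + snd x)"

lemma V_eq: "spider_verts m l = insert (0,0) (Sigma {1..m} (\<lambda>i. {1..l i}))"
  unfolding spider_verts_def by auto

lemma finV: "finite (spider_verts m l)"
  unfolding V_eq by auto

lemma cardV: "card (spider_verts m l) = 1 + PP l (Suc m)"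
proof -
  have "(0,0) \<notin> Sigma {1..m} (\<lambda>i. {1..l i})" by auto
  hence "card (spider_verts m l) = 1 + card (Sigma {1..m} (\<lambda>i. {1..l i}))"
    unfolding V_eq by (simp add: card_insert_if)
  also have "card (Sigma {1..m} (\<lambda>i. {1..l i})) = sum l {1..m}" by simp
  also have "{1..m} = {1..<Suc m}" by auto
  finally show ?thesis unfolding PP_def by simp
qed

lemma PP_mono: "i \<le> i' \<Longrightarrow> PP l i \<le> PP l i'"
  unfolding PP_def by (intro sum_mono2) auto

lemma PP_Suc: "1 \<le> i \<Longrightarrow> PP l (Suc i) = PP l i + l i"
  unfolding PP_def by (simp add: sum.atLeastLessThan_Suc)

lemma PP_1: "PP l 1 = 0" unfolding PP_def by simp

lemma inV: "x \<in> spider_verts m l \<longleftrightarrow> x = (0,0) \<or> (1 \<le> fst x \<and> fst x \<le> m \<and> 1 \<le> snd x \<and> snd x \<le> l (fst x))"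
  unfolding spider_verts_def by (cases x) auto

lemma pos_bound: "x \<in> spider_verts m l \<Longrightarrow> spos l x \<le> PP l (Suc m)"
proof -
  assume x: "x \<in> spider_verts m l"
  show ?thesis
  proof (cases "fst x = 0")
    case True thus ?thesis by (simp add: spos_def)
  next
    case False
    hence h: "1 \<le> fst x" "fst x \<le> m" "snd x \<le> l (fst x)" using x inV by auto
    have "spos l x \<le> PP l (fst x) + l (fst x)" using False h by (simp add: spos_def)
    also have "\<dots> = PP l (Suc (fst x))" using h by (simp add: PP_Suc)
    also have "\<dots> \<le> PP l (Suc m)" using h by (intro PP_mono) auto
    finally show ?thesis .
  qed
qed

lemma pos_lt: "x \<in> spider_verts m l \<Longrightarrow> spos l x < card (spider_verts m l)"
  using pos_bound[of x m l] cardV[of m l] by simp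

lemma pos_less: assumes "x \<in> spider_verts m l" "y \<in> spider_verts m l" "fst x < fst y"
  shows "spos l x < spos l y"
proof (cases "fst x = 0")
  case True
  thus ?thesis using assms inV[of y] by (auto simp: spos_def)
next
  case False
  hence h: "1 \<le> fst x" "snd x \<le> l (fst x)" using assms inV by auto
  have hy: "1 \<le> snd y" using assms inV[of y] by auto
  have "spos l x \<le> PP l (fst x) + l (fst x)" using False h by (simp add: spos_def)
  also have "\<dots> = PP l (Suc (fst x))" using h by (simp add: PP_Suc)
  also have "\<dots> \<le> PP l (fst y)" using assms by (intro PP_mono) auto
  also have "\<dots> < spos l y" using hy assms by (simp add: spos_def)
  finally show ?thesis .
qed

lemma pos_inj: "inj_on (spos l) (spider_verts m l)"
proof (rule inj_onI)
  fix x y assume xy: "x \<in> spider_verts m l" "y \<in> spider_verts m l" "spos l x = spos l y"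
  show "x = y"
  proof (cases "fst x = fst y")
    case True
    then show ?thesis using xy inV[of x] inV[of y] by (cases x; cases y) (auto simp: spos_def)
  next
    case False
    hence "fst x < fst y \<or> fst y < fst x" by auto
    thus ?thesis using pos_less[of x m l y] pos_less[of y m l x] xy by auto
  qed
qed

lemma pos_surj: assumes "p < card (spider_verts m l)" shows "\<exists>x\<in>spider_verts m l. spos l x = p"
proof -
  have sub: "spos l ` spider_verts m l \<subseteq> {..<card (spider_verts m l)}" using pos_lt by blast
  have "card (spos l ` spider_verts m l) = card (spider_verts m l)"
    using pos_inj by (rule card_image)
  hence "spos l ` spider_verts m l = {..<card (spider_verts m l)}"
    by (intro card_subset_eq[OF _ sub]) auto
  hence "p \<in> spos l ` spider_verts m l" using assms by simp
  thus ?thesis by blast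
qed

lemma adj_sym: "spider_adj m l x y \<longleftrightarrow> spider_adj m l y x"
  unfolding spider_adj_def by auto

lemma sq_sym: "graph_square V (spider_adj m l) x y \<longleftrightarrow> graph_square V (spider_adj m l) y x"
  unfolding graph_square_def using adj_sym by blast

lemma sq_nbr:
  assumes "graph_square (spider_verts m l) (spider_adj m l) y (i,j)" "1 \<le> i"
  shows "(y = (0,0) \<and> j \<le> 2) \<or> (fst y = i \<and> snd y < j + 3 \<and> j < snd y + 3 \<and> snd y \<noteq> j)
     \<or> (j = 1 \<and> snd y = 1 \<and> 1 \<le> fst y \<and> fst y \<le> m)"
  using assms unfolding graph_square_def spider_adj_def spider_verts_def
  by (cases y) auto


definition bl :: "nat \<Rightarrow> (nat\<Rightarrow>nat) \<Rightarrow> nat\<times>nat \<Rightarrow> nat" where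
  "bl m l x = spos l x div (m+2)"

definition NN :: "nat \<Rightarrow> (nat\<Rightarrow>nat) \<Rightarrow> nat\<times>nat \<Rightarrow> (nat\<times>nat) set" where
  "NN m l z = {y \<in> spider_verts m l. bl m l y < bl m l z \<and>
      (graph_square (spider_verts m l) (spider_adj m l) y z \<or> graph_square (spider_verts m l) (spider_adj m l) z y)}"

lemma NN_basic:
  assumes "y \<in> NN m l z"
  shows "y \<in> spider_verts m l" "graph_square (spider_verts m l) (spider_adj m l) y z"
    "spos l y < bl m l z * (m+2)" "bl m l z * (m+2) \<le> spos l z"
proof -
  show "y \<in> spider_verts m l" using assms NN_def by auto
  show "graph_square (spider_verts m l) (spider_adj m l) y z" using assms NN_def sq_sym by blast
  have "spos l y div (m+2) < bl m l z" using assms unfolding NN_def bl_def by auto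
  thus "spos l y < bl m l z * (m+2)" by (simp add: div_less_iff_less_mult)
  show "bl m l z * (m+2) \<le> spos l z" unfolding bl_def by (rule div_times_less_eq_dividend)
qed

lemma NN_ge2:
  assumes z: "(i,j) \<in> spider_verts m l" "1 \<le> i" "2 \<le> j" and y: "y \<in> NN m l (i,j)"
  shows "(y = (0,0) \<and> j = 2) \<or> (\<exists>j'. y = (i,j') \<and> 1 \<le> j' \<and> j' < j \<and> j \<le> j' + 2 \<and> PP l i + j' < bl m l (i,j) * (m+2))"
proof -
  note b = NN_basic[OF y]
  have sz: "spos l (i,j) = PP l i + j" using z by (simp add: spos_def)
  from sq_nbr[OF b(2) z(2)]
  show ?thesis
  proof (elim disjE)
    assume "y = (0,0) \<and> j \<le> 2" thus ?thesis using z by auto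
  next
    assume h: "fst y = i \<and> snd y < j + 3 \<and> j < snd y + 3 \<and> snd y \<noteq> j"
    have y1: "1 \<le> snd y" using b(1) inV[of y] h z by auto
    have sy: "spos l y = PP l i + snd y" using h z by (simp add: spos_def)
    have "snd y < j" using b(3) b(4) sy sz h by linarith
    thus ?thesis using h y1 b(3) sy by (intro disjI2 exI[of _ "snd y"]) (auto simp: prod_eq_iff)
  next
    assume "j = 1 \<and> snd y = 1 \<and> 1 \<le> fst y \<and> fst y \<le> m" thus ?thesis using z by auto
  qed
qed

lemma NN_ge2_le2:
  assumes z: "(i,j) \<in> spider_verts m l" "1 \<le> i" "2 \<le> j"
  shows "card (NN m l (i,j)) \<le> 2"
proof -
  have "NN m l (i,j) \<subseteq> {if j = 2 then (0,0) else (i,j-2), (i,j-1)}"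
  proof
    fix y assume "y \<in> NN m l (i,j)"
    from NN_ge2[OF z this] show "y \<in> {if j = 2 then (0,0) else (i,j-2), (i,j-1)}"
      by (cases "j = 2") auto
  qed
  hence "card (NN m l (i,j)) \<le> card {if j = 2 then (0,0) else (i,j-2), (i,j-1)}"
    by (intro card_mono) auto
  also have "\<dots> \<le> 2" by (simp add: card_insert_if)
  finally show ?thesis .
qed

lemma NN_ge2_le1:
  assumes z: "(i,j) \<in> spider_verts m l" "1 \<le> i" "2 \<le> j" and ne: "spos l (i,j) \<noteq> bl m l (i,j) * (m+2)"
  shows "card (NN m l (i,j)) \<le> 1"
proof -
  have sz: "spos l (i,j) = PP l i + j" using z by (simp add: spos_def)
  have ge: "bl m l (i,j) * (m+2) \<le> spos l (i,j)" unfolding bl_def by (rule div_times_less_eq_dividend)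
  have "NN m l (i,j) \<subseteq> {if j = 2 then (0,0) else (i,j-2)}"
  proof
    fix y assume "y \<in> NN m l (i,j)"
    from NN_ge2[OF z this] show "y \<in> {if j = 2 then (0,0) else (i,j-2)}"
      using sz ge ne by (cases "j = 2") auto
  qed
  hence "card (NN m l (i,j)) \<le> card {if j = 2 then (0,0) else (i,j-2)}"
    by (intro card_mono) auto
  also have "\<dots> \<le> 1" by simp
  finally show ?thesis .
qed

lemma NN_ge3_0:
  assumes z: "(i,j) \<in> spider_verts m l" "1 \<le> i" "3 \<le> j" and ge2: "bl m l (i,j) * (m+2) + 2 \<le> spos l (i,j)"
  shows "NN m l (i,j) = {}"
proof -
  have sz: "spos l (i,j) = PP l i + j" using z by (simp add: spos_def)
  show ?thesis
  proof (rule ccontr)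
    assume "NN m l (i,j) \<noteq> {}"
    then obtain y where "y \<in> NN m l (i,j)" by auto
    from NN_ge2[OF z(1,2) _ this] z(3) show False using sz ge2 by auto
  qed
qed

lemma NN_1:
  assumes z: "(i,1) \<in> spider_verts m l" "1 \<le> i"
  shows "card (NN m l (i,1)) \<le> 1 + card {i'\<in>{1..m}. bl m l (i',1) < bl m l (i,1)}"
proof -
  define I where "I = {i'\<in>{1..m}. bl m l (i',1) < bl m l (i,1)}"
  define T where "T = insert (0,0) ((\<lambda>i'. (i',1::nat)) ` I)"
  have sub: "NN m l (i,1) \<subseteq> T"
  proof
    fix y assume y: "y \<in> NN m l (i,1)"
    note b = NN_basic[OF y]
    have sz: "spos l (i,1) = PP l i + 1" using z by (simp add: spos_def)
    from sq_nbr[OF b(2) z(2)]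
    show "y \<in> T"
    proof (elim disjE)
      assume "y = (0,0) \<and> 1 \<le> (2::nat)" thus ?thesis unfolding T_def by auto
    next
      assume h: "fst y = i \<and> snd y < 1 + 3 \<and> 1 < snd y + 3 \<and> snd y \<noteq> 1"
      have y1: "1 \<le> snd y" using b(1) inV[of y] h z by auto
      have sy: "spos l y = PP l i + snd y" using h z by (simp add: spos_def)
      have False using b(3) b(4) sy sz h y1 by linarith
      thus ?thesis ..
    next
      assume h: "1 = (1::nat) \<and> snd y = 1 \<and> 1 \<le> fst y \<and> fst y \<le> m"
      have "bl m l y < bl m l (i,1)" using y unfolding NN_def by auto
      moreover have "y = (fst y, 1)" using h by (simp add: prod_eq_iff)
      ultimately have "fst y \<in> I \<and> y = (fst y, 1)" using h unfolding I_def by auto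
      thus ?thesis unfolding T_def by blast
    qed
  qed
  have fin: "finite T" unfolding T_def I_def by auto
  have "card (NN m l (i,1)) \<le> card T" by (rule card_mono[OF fin sub])
  also have "\<dots> \<le> 1 + card ((\<lambda>i'. (i',1::nat)) ` I)"
    unfolding T_def using card_insert_le[of "(\<lambda>i'. (i',1::nat)) ` I" "(0,0)"] fin T_def by (auto simp: card_insert_if)
  also have "\<dots> \<le> 1 + card I"
    by (simp add: card_image_le I_def)
  finally show ?thesis unfolding I_def .
qed


lemma bl_eq: assumes "b * (m+2) \<le> spos l z" "spos l z < b * (m+2) + (m+2)" shows "bl m l z = b"
  unfolding bl_def using assms by (intro div_nat_eqI) (auto simp: algebra_simps)

lemma bl_range: "b * (m+2) \<le> spos l z \<and> spos l z < b * (m+2) + (m+2)" if "bl m l z = b"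
proof -
  have d: "spos l z div (m+2) = b" using that bl_def by simp
  have "spos l z = spos l z div (m+2) * (m+2) + spos l z mod (m+2)" by (rule div_mult_mod_eq[symmetric])
  hence e: "spos l z = b * (m+2) + spos l z mod (m+2)" using d by simp
  have "spos l z mod (m+2) < m+2" by simp
  thus ?thesis using e by linarith
qed

lemma z0_exists:
  assumes m3: "m \<ge> 3"
    and lmono: "\<And>i j. 1 \<le> i \<Longrightarrow> i \<le> j \<Longrightarrow> j \<le> m \<Longrightarrow> l i \<le> l j"
    and b1: "1 \<le> b" and full: "b*(m+2) + (m+1) < card (spider_verts m l)"
  shows "\<exists>z\<in>spider_verts m l. bl m l z = b \<and> 3 \<le> snd z \<and> 1 \<le> fst z \<and> b*(m+2) + 2 \<le> spos l z"
proof -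
  define p where "p = b*(m+2) + (m+1)"
  obtain x where x: "x \<in> spider_verts m l" "spos l x = p" using pos_surj full p_def by blast
  have "1*(m+2) \<le> b*(m+2)" using b1 by (rule mult_le_mono1)
  hence pge: "p \<ge> 2*m + 3" using p_def by simp
  have fx: "fst x \<noteq> 0" using x pge by (auto simp: spos_def split: if_splits)
  hence h: "1 \<le> fst x" "fst x \<le> m" "1 \<le> snd x" "snd x \<le> l (fst x)" using x(1) inV by auto
  have sx: "spos l x = PP l (fst x) + snd x" using fx by (simp add: spos_def)
  show ?thesis
  proof (cases "3 \<le> snd x")
    case True
    have "bl m l x = b" using x(2) p_def by (intro bl_eq) auto
    thus ?thesis using True h x p_def m3 by (intro bexI[of _ x]) auto
  next
    case False
    hence PPge: "PP l (fst x) + 2 \<ge> p" using sx x(2) by linarith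
    have "fst x \<noteq> 1"
    proof
      assume "fst x = 1" thus False using PPge PP_1[of l] pge by simp
    qed
    then obtain i where i: "fst x = Suc i" "1 \<le> i" using h(1) by (cases "fst x") auto
    have PPi: "PP l (fst x) = PP l i + l i" using i by (simp add: PP_Suc)
    show ?thesis
    proof (cases "3 \<le> l i")
      case True
      define z where "z = (i, l i)"
      have zV: "z \<in> spider_verts m l" using True i h unfolding z_def inV by auto
      have sz: "spos l z = PP l (fst x)" using PPi i by (simp add: spos_def z_def)
      have le: "PP l (fst x) \<le> p" using sx x(2) by linarith
      have "bl m l z = b" using sz le PPge p_def m3 by (intro bl_eq) auto
      thus ?thesis using zV sz le PPge p_def m3 True i unfolding z_def by (intro bexI[of _ "(i, l i)"]) auto
    next
      case False
      have "\<forall>i'\<in>{1..<fst x}. l i' \<le> 2"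
      proof
        fix i' assume "i' \<in> {1..<fst x}"
        hence "1 \<le> i'" "i' \<le> i" using i by auto
        hence "l i' \<le> l i" using lmono[of i' i] i h by auto
        thus "l i' \<le> 2" using False by simp
      qed
      hence "PP l (fst x) \<le> sum (\<lambda>_. 2) {1..<fst x}" unfolding PP_def by (intro sum_mono) auto
      also have "\<dots> = 2 * (fst x - 1)" by simp
      finally have "PP l (fst x) \<le> 2 * (fst x - 1)" .
      hence "PP l (fst x) \<le> 2 * m - 2" using h by linarith
      thus ?thesis using PPge pge by linarith
    qed
  qed
qed


lemma crit:
  assumes m3: "m \<ge> 3"
    and lmono: "\<And>i j. 1 \<le> i \<Longrightarrow> i \<le> j \<Longrightarrow> j \<le> m \<Longrightarrow> l i \<le> l j"
  shows "card {z\<in>spider_verts m l. bl m l z = b \<and> (m+2) - card (NN m l z) \<le> w} \<le> w"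
proof -
  define V where "V = spider_verts m l"
  define k where "k = m + 2"
  define Bk where "Bk = {z\<in>V. bl m l z = b}"
  define S where "S = {z\<in>V. bl m l z = b \<and> k - card (NN m l z) \<le> w}"
  have finV': "finite V" using finV V_def by simp
  have SBk: "S \<subseteq> Bk" unfolding S_def Bk_def by auto
  have finBk: "finite Bk" using finV' Bk_def by simp
  have finS: "finite S" using finV' S_def by simp
  have injBk: "inj_on (spos l) Bk" using pos_inj[of l m] unfolding Bk_def V_def by (rule inj_on_subset) auto
  have cardBk_img: "card Bk = card (spos l ` Bk)" using injBk by (simp add: card_image)
  have cardBk: "card Bk \<le> k"
  proof -
    have "spos l ` Bk \<subseteq> {b*k..<b*k+k}" using bl_range unfolding Bk_def k_def by fastforce
    hence "card (spos l ` Bk) \<le> card {b*k..<b*k+k}" by (intro card_mono) auto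
    thus ?thesis using cardBk_img by simp
  qed
  show ?thesis
  proof (cases "k \<le> w")
    case True
    have "card S \<le> card Bk" using SBk finBk by (rule card_mono[rotated])
    thus ?thesis using cardBk True unfolding S_def V_def k_def by simp
  next
    case wk: False
    have Sge: "k - w \<le> card (NN m l z)" if "z \<in> S" for z using that wk unfolding S_def by auto
    show ?thesis
    proof (cases "b = 0")
      case True
      have "S = {}"
      proof (rule ccontr)
        assume "S \<noteq> {}"
        then obtain z where z: "z \<in> S" by auto
        have "NN m l z = {}" using z True unfolding S_def NN_def by auto
        thus False using Sge[OF z] wk by simp
      qed
      hence "card S \<le> w" by (simp only: card.empty le0)
      thus ?thesis unfolding S_def V_def k_def .
    next
      case b1: False
      have zBk: "1 \<le> fst z \<and> fst z \<le> m \<and> 1 \<le> snd z \<and> snd z \<le> l (fst z)" if "z \<in> Bk" for z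
      proof -
        have "z \<noteq> (0,0)"
        proof
          assume "z = (0,0)"
          hence "bl m l z = 0" unfolding bl_def by (simp add: spos_def)
          thus False using that b1 unfolding Bk_def by simp
        qed
        thus ?thesis using that inV[of z m l] unfolding Bk_def V_def by auto
      qed
      define I where "I = {i\<in>{1..m}. bl m l (i,1) = b}"
      define Eb where "Eb = {i\<in>{1..m}. bl m l (i,1) < b}"
      have IE: "card I + card Eb \<le> m"
      proof -
        have "card I + card Eb = card (I \<union> Eb)" unfolding I_def Eb_def
          by (rule card_Un_disjoint[symmetric]) auto
        also have "\<dots> \<le> card {1..m}" unfolding I_def Eb_def by (intro card_mono) auto
        finally show ?thesis by simp
      qed
      have E1: "1 \<le> card Eb"
      proof -
        have "PP l 1 = 0" by (rule PP_1)
        hence "bl m l (1,1) = 0" unfolding bl_def by (simp add: spos_def)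
        hence "1 \<in> Eb" unfolding Eb_def using b1 m3 by auto
        moreover have "finite Eb" unfolding Eb_def by simp
        ultimately have "card Eb > 0" by (auto simp: card_gt_0_iff)
        thus ?thesis by simp
      qed
      define X where "X = {z\<in>Bk. snd z = 1}"
      have cardX: "card X \<le> card I"
      proof -
        have "X \<subseteq> (\<lambda>i. (i,1::nat)) ` I"
        proof
          fix z assume "z \<in> X"
          hence "z \<in> Bk" "snd z = 1" unfolding X_def by auto
          hence zB: "z \<in> Bk" and zz: "z = (fst z, 1)" by (auto simp: prod_eq_iff)
          have "bl m l (fst z, 1) = b" using zB zz unfolding Bk_def by (metis (mono_tags, lifting) mem_Collect_eq)
          hence "fst z \<in> I" using zBk[OF zB] unfolding I_def by auto
          thus "z \<in> (\<lambda>i. (i,1::nat)) ` I" using zz by blast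
        qed
        hence "card X \<le> card ((\<lambda>i. (i,1::nat)) ` I)" by (intro card_mono) (auto simp: I_def)
        also have "\<dots> \<le> card I" by (rule card_image_le) (simp add: I_def)
        finally show ?thesis .
      qed
      have Xval: "card (NN m l z) \<le> 1 + card Eb" if "z \<in> X" for z
      proof -
        have z: "z \<in> Bk" "snd z = 1" using that X_def by auto
        hence zz: "z = (fst z, 1)" by (simp add: prod_eq_iff)
        have "(fst z, 1) \<in> spider_verts m l" using z zz Bk_def V_def by auto
        from NN_1[OF this] zBk[OF z(1)] have "card (NN m l (fst z, 1)) \<le> 1 + card {i'\<in>{1..m}. bl m l (i',1) < bl m l (fst z,1)}"
          by simp
        moreover have "bl m l (fst z, 1) = b" using z zz Bk_def by auto
        ultimately show ?thesis using zz Eb_def by simp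
      qed
      have ge2_le2: "card (NN m l z) \<le> 2" if "z \<in> Bk" "2 \<le> snd z" for z
      proof -
        have "(fst z, snd z) \<in> spider_verts m l" using that Bk_def V_def by auto
        from NN_ge2_le2[OF this] that zBk show ?thesis by simp
      qed
      show ?thesis
      proof (cases "w + 1 \<le> m")
        case True
        have SX: "S \<subseteq> X"
        proof
          fix z assume z: "z \<in> S"
          have "snd z = 1"
          proof (rule ccontr)
            assume "snd z \<noteq> 1"
            hence "2 \<le> snd z" using zBk z SBk by fastforce
            hence "card (NN m l z) \<le> 2" using ge2_le2[of z] z SBk by blast
            thus False using Sge[OF z] True k_def by linarith
          qed
          thus "z \<in> X" using z SBk X_def by auto
        qed
        show ?thesis
        proof (cases "S = {}")
          case True hence "card S \<le> w" by (simp only: card.empty le0)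
          thus ?thesis unfolding S_def V_def k_def .
        next
          case False
          then obtain z where z: "z \<in> S" by auto
          have "k - w \<le> 1 + card Eb" using Sge[OF z] Xval[of z] SX z by force
          moreover have "card S \<le> card X" using SX by (intro card_mono) (auto simp: X_def finBk)
          ultimately have "card S \<le> w" using cardX IE k_def wk by linarith
          thus ?thesis unfolding S_def V_def k_def .
        qed
      next
        case False
        show ?thesis
        proof (cases "w = m")
          case True
          define Q where "Q = {z\<in>V. spos l z = b*k}"
          have cQ: "card Q \<le> 1"
          proof -
            have "finite Q" using finV' Q_def by simp
            moreover have "\<forall>a1\<in>Q. \<forall>a2\<in>Q. a1 = a2" using pos_inj[of l m] unfolding Q_def V_def inj_on_def by auto
            ultimately show ?thesis using card_le_Suc0_iff_eq[of Q] by simp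
          qed
          have SXQ: "S \<subseteq> X \<union> Q"
          proof
            fix z assume z: "z \<in> S"
            show "z \<in> X \<union> Q"
            proof (cases "snd z = 1")
              case True thus ?thesis using z SBk X_def by auto
            next
              case False
              hence s2: "2 \<le> snd z" using zBk z SBk by fastforce
              have "spos l z = b * k"
              proof (rule ccontr)
                assume ne: "spos l z \<noteq> b * k"
                have zin: "(fst z, snd z) \<in> spider_verts m l" using z SBk Bk_def V_def by auto
                have bz: "bl m l z = b" using z S_def by auto
                have "card (NN m l (fst z, snd z)) \<le> 1"
                  using NN_ge2_le1[OF zin] zBk[of z] z SBk s2 ne bz k_def by auto
                thus False using Sge[OF z] True k_def by simp
              qed
              thus ?thesis using z S_def Q_def by auto
            qed
          qed
          have "card S \<le> card (X \<union> Q)" using SXQ by (intro card_mono) (auto simp: X_def Q_def finBk finV')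
          also have "\<dots> \<le> card X + card Q" by (rule card_Un_le)
          finally have "card S \<le> w" using cQ cardX IE E1 True by linarith
          thus ?thesis unfolding S_def V_def k_def .
        next
          case False
          hence w1: "w = m + 1" using \<open>\<not> w + 1 \<le> m\<close> \<open>w \<noteq> m\<close> wk k_def by linarith
          show ?thesis
          proof (cases "b*(m+2) + (m+1) < card V")
            case True
            have ex: "\<exists>z\<in>spider_verts m l. bl m l z = b \<and> 3 \<le> snd z \<and> 1 \<le> fst z \<and> b*(m+2) + 2 \<le> spos l z"
            proof (rule z0_exists)
              show "m \<ge> 3" by (rule m3)
              show "\<And>i j. 1 \<le> i \<Longrightarrow> i \<le> j \<Longrightarrow> j \<le> m \<Longrightarrow> l i \<le> l j" by (rule lmono)
              show "1 \<le> b" using b1 by simp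
              show "b*(m+2) + (m+1) < card (spider_verts m l)" using True V_def by simp
            qed
            obtain z0 where z0: "z0 \<in> V" "bl m l z0 = b" "3 \<le> snd z0" "1 \<le> fst z0" "b*(m+2) + 2 \<le> spos l z0"
              using ex V_def by blast
            have "(fst z0, snd z0) \<in> spider_verts m l" using z0 V_def by simp
            from NN_ge3_0[OF this] z0 have "NN m l z0 = {}" by simp
            hence "z0 \<notin> S" using w1 S_def k_def by auto
            hence "S \<subseteq> Bk - {z0}" using SBk by auto
            hence "card S \<le> card (Bk - {z0})" using finBk by (intro card_mono) auto
            also have "\<dots> = card Bk - 1" using z0 Bk_def finBk by simp
            finally have "card S \<le> w" using cardBk w1 k_def by linarith
            thus ?thesis unfolding S_def V_def k_def .
          next
            case False
            have "spos l ` Bk \<subseteq> {b*k..<card V}"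
            proof
              fix s assume "s \<in> spos l ` Bk"
              then obtain z where "z \<in> Bk" "s = spos l z" by auto
              thus "s \<in> {b*k..<card V}" using bl_range[of m l z b] pos_lt[of z m l] Bk_def V_def k_def by auto
            qed
            hence "card (spos l ` Bk) \<le> card {b*k..<card V}" by (intro card_mono) auto
            hence "card Bk \<le> card V - b*k" using cardBk_img by simp
            hence "card Bk \<le> card V - b*(m+2)" using k_def by simp
            hence "card Bk \<le> w" using False w1 by linarith
            moreover have "card S \<le> card Bk" using SBk finBk by (rule card_mono[rotated])
            ultimately show ?thesis unfolding S_def V_def k_def by simp
          qed
        qed
      qed
    qed
  qed
qed


theorem lemma2p4:
  fixes m :: nat and l :: "nat \<Rightarrow> nat"
  assumes "m \<ge> 3"
    and "\<And>i. 1 \<le> i \<Longrightarrow> i \<le> m \<Longrightarrow> l i \<ge> 1"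
    and "\<And>i j. 1 \<le> i \<Longrightarrow> i \<le> j \<Longrightarrow> j \<le> m \<Longrightarrow> l i \<le> l j"
  shows "equitably_choosable (spider_verts m l)
           (graph_square (spider_verts m l) (spider_adj m l)) (m + 2)"
  unfolding equitably_choosable_def
proof (intro allI impI)
  fix L assume kL: "k_assignment (spider_verts m l) (m + 2) L"
  define V where "V = spider_verts m l"
  define t where "t = (card V - 1) div (m+2) + 1"
  have bt: "\<forall>x\<in>spider_verts m l. bl m l x < t"
  proof
    fix x assume x: "x \<in> spider_verts m l"
    have "spos l x \<le> card V - 1" using pos_lt[OF x] V_def by simp
    hence "spos l x div (m+2) \<le> (card V - 1) div (m+2)" by (rule div_le_mono)
    thus "bl m l x < t" unfolding bl_def t_def by simp
  qed
  have irr: "\<forall>x\<in>spider_verts m l. \<not> graph_square (spider_verts m l) (spider_adj m l) x x"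
    unfolding graph_square_def by simp
  have cr: "\<And>b w. card {z\<in>spider_verts m l. bl m l z = b \<and> (m+2) - card {y\<in>spider_verts m l. bl m l y < bl m l z \<and>
      (graph_square (spider_verts m l) (spider_adj m l) y z \<or> graph_square (spider_verts m l) (spider_adj m l) z y)} \<le> w} \<le> w"
  proof -
    fix b w
    have "card {z\<in>spider_verts m l. bl m l z = b \<and> (m+2) - card (NN m l z) \<le> w} \<le> w"
      using crit[of m l b w] assms(1,3) by blast
    thus "card {z\<in>spider_verts m l. bl m l z = b \<and> (m+2) - card {y\<in>spider_verts m l. bl m l y < bl m l z \<and>
      (graph_square (spider_verts m l) (spider_adj m l) y z \<or> graph_square (spider_verts m l) (spider_adj m l) z y)} \<le> w} \<le> w"
      unfolding NN_def .
  qed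
  obtain f where f1: "\<forall>v\<in>spider_verts m l. f v \<in> L v"
    and f2: "\<forall>x\<in>spider_verts m l. \<forall>y\<in>spider_verts m l. graph_square (spider_verts m l) (spider_adj m l) x y \<longrightarrow> f x \<noteq> f y"
    and f3: "\<forall>c. card {v\<in>spider_verts m l. f v = c} \<le> t"
    using block_greedy[OF finV kL bt irr cr] by blast
  have tle: "t \<le> nat \<lceil>real (card V) / real (m + 2)\<rceil>"
  proof -
    define q where "q = (card V - 1) div (m+2)"
    have cV: "card V \<ge> 1" using cardV[of m l] V_def by simp
    have "q * (m+2) \<le> card V - 1" unfolding q_def by (rule div_times_less_eq_dividend)
    hence "q * (m+2) < card V" using cV by linarith
    hence "real q * real (m+2) < real (card V)" by (metis of_nat_less_iff of_nat_mult)
    hence "real q < real (card V) / real (m+2)" by (simp add: field_simps)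
    hence "of_int (int q) < real (card V) / real (m+2)" by simp
    hence "int q < \<lceil>real (card V) / real (m + 2)\<rceil>" by (simp only: less_ceiling_iff)
    hence "int q + 1 \<le> \<lceil>real (card V) / real (m + 2)\<rceil>" by linarith
    thus ?thesis unfolding t_def q_def[symmetric] by linarith
  qed
  show "\<exists>f. equitable_L_coloring (spider_verts m l) (graph_square (spider_verts m l) (spider_adj m l)) (m + 2) L f"
    unfolding equitable_L_coloring_def
    using f1 f2 f3 tle V_def le_trans by blast
qed

end
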